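(* Let $E$ be a real vector space, $M$ a linear subspace of $E$, $S$ a sublinear functional on $E$ and $P$ a superlinear functional on $E$. Let $x_0\in E\setminus M$ and let $M_1$ be the smallest linear subspace of $E$ containing $M$ and $x_0$. Let $f_0$ be a linear functional on $M$ such that $f_0(x)\le S(x+y)-P(y)$ for every $x\in M$ and every $y\in M_1$. Then there exists a linear functional $L$ on $M_1$ such that $L(x)=f_0(x)$ for all $x\in M$ and $P(x)\le L(x)\le S(x)$ for every $x\in M_1$.
   Context: A functional $S:E\to\mathbb{R}$ is sublinear if $S(x+y)\le S(x)+S(y)$ for all $x,y\in E$ and $S(\alpha x)=\alpha S(x)$ for all $x\in E$, $\alpha>0$. A functional $P:E\to\mathbb{R}$ is superlinear if $P(x+y)\ge P(x)+P(y)$ and $P(\alpha x)=\alpha P(x)$ for all $x,y\in E$, $\alpha>0$. *)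

theory Defs
  imports "HOL-Analysis.Analysis"
begin

definition sublinear :: "('a::real_vector \<Rightarrow> real) \<Rightarrow> bool" where
  "sublinear S \<longleftrightarrow> (\<forall>x y. S (x + y) \<le> S x + S y) \<and> (\<forall>x (\<alpha>::real). \<alpha> > 0 \<longrightarrow> S (\<alpha> *\<^sub>R x) = \<alpha> * S x)"

definition superlinear :: "('a::real_vector \<Rightarrow> real) \<Rightarrow> bool" where
  "superlinear P \<longleftrightarrow> (\<forall>x y. P (x + y) \<ge> P x + P y) \<and> (\<forall>x (\<alpha>::real). \<alpha> > 0 \<longrightarrow> P (\<alpha> *\<^sub>R x) = \<alpha> * P x)"

definition linear_functional_on :: "'a::real_vector set \<Rightarrow> ('a \<Rightarrow> real) \<Rightarrow> bool" where
  "linear_functional_on U f \<longleftrightarrow>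
     (\<forall>x\<in>U. \<forall>y\<in>U. f (x + y) = f x + f y) \<and> (\<forall>x\<in>U. \<forall>c::real. f (c *\<^sub>R x) = c * f x)"

end

theory Submission
  imports Defs
begin

theorem lemma4p5:
  fixes M :: "'a::real_vector set" and S P f0 :: "'a \<Rightarrow> real" and x0 :: 'a
  assumes "subspace M"
    and "sublinear S" and "superlinear P"
    and "x0 \<notin> M"
    and "linear_functional_on M f0"
    and "\<forall>x\<in>M. \<forall>y\<in>span (insert x0 M). f0 x \<le> S (x + y) - P y"
  shows "\<exists>L. linear_functional_on (span (insert x0 M)) L \<and> (\<forall>x\<in>M. L x = f0 x) \<and>
             (\<forall>x\<in>span (insert x0 M). P x \<le> L x \<and> L x \<le> S x)"
proof -
  define M1 where "M1 = span (insert x0 M)"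
  have sM: "subspace M" by fact
  have spanM: "span M = M" using sM by (simp add: span_eq_iff)
  have MM1: "M \<subseteq> M1" unfolding M1_def by (meson span_mono span_superset subset_insertI subset_trans)
  have x0M1: "x0 \<in> M1" unfolding M1_def by (simp add: span_base)
  have M0: "0 \<in> M" using sM subspace_0 by blast
  have Madd: "\<And>a b. a \<in> M \<Longrightarrow> b \<in> M \<Longrightarrow> a + b \<in> M" using sM subspace_add by blast
  have Mscale: "\<And>a (r::real). a \<in> M \<Longrightarrow> r *\<^sub>R a \<in> M" using sM subspace_scale by blast
  have Mdiff: "\<And>a b. a \<in> M \<Longrightarrow> b \<in> M \<Longrightarrow> a - b \<in> M" using sM subspace_diff by blast
  have Mneg: "\<And>a. a \<in> M \<Longrightarrow> - a \<in> M" using sM subspace_neg by blast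
  have M1add: "\<And>a b. a \<in> M1 \<Longrightarrow> b \<in> M1 \<Longrightarrow> a + b \<in> M1" unfolding M1_def by (simp add: span_add)
  have M1diff: "\<And>a b. a \<in> M1 \<Longrightarrow> b \<in> M1 \<Longrightarrow> a - b \<in> M1" unfolding M1_def by (simp add: span_diff)
  have Sadd: "\<And>x y. S (x + y) \<le> S x + S y" using assms(2) unfolding sublinear_def by blast
  have Shom: "\<And>x (t::real). t > 0 \<Longrightarrow> S (t *\<^sub>R x) = t * S x" using assms(2) unfolding sublinear_def by blast
  have Padd: "\<And>x y. P (x + y) \<ge> P x + P y" using assms(3) unfolding superlinear_def by blast
  have Phom: "\<And>x (t::real). t > 0 \<Longrightarrow> P (t *\<^sub>R x) = t * P x" using assms(3) unfolding superlinear_def by blast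
  have fadd: "\<And>x y. x \<in> M \<Longrightarrow> y \<in> M \<Longrightarrow> f0 (x + y) = f0 x + f0 y"
    using assms(5) unfolding linear_functional_on_def by blast
  have fscale: "\<And>x r. x \<in> M \<Longrightarrow> f0 (r *\<^sub>R x) = r * f0 x"
    using assms(5) unfolding linear_functional_on_def by blast
  have f00: "f0 0 = 0" using fscale[OF M0, of 0] by simp
  have fneg: "\<And>x. x \<in> M \<Longrightarrow> f0 (- x) = - f0 x" using fscale[of _ "-1"] by simp
  have fdiff: "\<And>x y. x \<in> M \<Longrightarrow> y \<in> M \<Longrightarrow> f0 (x - y) = f0 x - f0 y"
    by (metis Mneg diff_conv_add_uminus fadd fneg)
  have hyp: "\<And>x y. x \<in> M \<Longrightarrow> y \<in> M1 \<Longrightarrow> f0 x \<le> S (x + y) - P y"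
    using assms(6) unfolding M1_def by blast
  have S0: "S 0 = 0" using Shom[of 2 0] by simp
  have P0: "P 0 = 0" using Phom[of 2 0] by simp
  have fS: "\<And>x. x \<in> M \<Longrightarrow> f0 x \<le> S x" using hyp[of _ 0] M0 MM1 P0 by auto
  have Pf: "\<And>x. x \<in> M \<Longrightarrow> P x \<le> f0 x"
  proof -
    fix x assume x: "x \<in> M"
    have "f0 (-x) \<le> S (-x + x) - P x" using hyp[of "-x" x] x MM1 Mneg by auto
    then show "P x \<le> f0 x" using S0 fneg[OF x] by simp
  qed
  have PS: "\<And>y. y \<in> M1 \<Longrightarrow> P y \<le> S y" using hyp[OF M0] f00 by auto
  define A where "A = (\<lambda>u. f0 u - S (u - x0)) ` M \<union> (\<lambda>u. P (u + x0) - f0 u) ` M"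
  have Abnd: "\<And>a v. a \<in> A \<Longrightarrow> v \<in> M \<Longrightarrow> a \<le> S (v + x0) - f0 v \<and> a \<le> f0 v - P (v - x0)"
  proof -
    fix a v assume a: "a \<in> A" and v: "v \<in> M"
    have vx: "v + x0 \<in> M1" "v - x0 \<in> M1" using v MM1 x0M1 M1add M1diff by auto
    show "a \<le> S (v + x0) - f0 v \<and> a \<le> f0 v - P (v - x0)"
      using a unfolding A_def
    proof
      assume "a \<in> (\<lambda>u. f0 u - S (u - x0)) ` M"
      then obtain u where u: "u \<in> M" and a: "a = f0 u - S (u - x0)" by auto
      have ux: "u - x0 \<in> M1" "u + x0 \<in> M1" using u MM1 x0M1 M1add M1diff by auto
      have 1: "f0 (u + v) \<le> S (u + v)" using fS Madd u v by blast
      have 2: "S (u + v) \<le> S (u - x0) + S (v + x0)" using Sadd[of "u - x0" "v + x0"] by simp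
      have 3: "f0 (u - v) \<le> S (u - x0) - P (v - x0)"
        using hyp[of "u - v" "v - x0"] Mdiff u v vx by simp
      show ?thesis using 1 2 3 fadd[OF u v] fdiff[OF u v] a by linarith
    next
      assume "a \<in> (\<lambda>u. P (u + x0) - f0 u) ` M"
      then obtain u where u: "u \<in> M" and a: "a = P (u + x0) - f0 u" by auto
      have ux: "u - x0 \<in> M1" "u + x0 \<in> M1" using u MM1 x0M1 M1add M1diff by auto
      have 3: "f0 (v - u) \<le> S (v + x0) - P (u + x0)"
        using hyp[of "v - u" "u + x0"] Mdiff u v ux by (simp add: algebra_simps)
      have 4: "P (u + x0) + P (v - x0) \<le> P (u + v)" using Padd[of "u + x0" "v - x0"] by simp
      have 5: "P (u + v) \<le> f0 (u + v)" using Pf Madd u v by blast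
      show ?thesis using 3 4 5 fadd[OF u v] fdiff[OF v u] a by linarith
    qed
  qed
  define c where "c = Sup A"
  have Ane: "A \<noteq> {}" unfolding A_def using M0 by blast
  have Abdd: "bdd_above A" using Abnd[OF _ M0] by (meson bdd_aboveI)
  have cge: "\<And>a. a \<in> A \<Longrightarrow> a \<le> c" unfolding c_def using Abdd cSup_upper by blast
  have cle: "\<And>v. v \<in> M \<Longrightarrow> c \<le> S (v + x0) - f0 v \<and> c \<le> f0 v - P (v - x0)"
    unfolding c_def using Ane Abnd by (meson cSup_least)
  have c1: "\<And>u. u \<in> M \<Longrightarrow> f0 u - S (u - x0) \<le> c" using cge unfolding A_def by blast
  have c2: "\<And>u. u \<in> M \<Longrightarrow> P (u + x0) - f0 u \<le> c" using cge unfolding A_def by blast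
  have rep: "\<And>z. z \<in> M1 \<Longrightarrow> \<exists>k. z - k *\<^sub>R x0 \<in> M"
    unfolding M1_def span_insert spanM by blast
  have uniq: "\<And>z k k'. z - k *\<^sub>R x0 \<in> M \<Longrightarrow> z - k' *\<^sub>R x0 \<in> M \<Longrightarrow> k = k'"
  proof (rule ccontr)
    fix z k k' assume h: "z - k *\<^sub>R x0 \<in> M" "z - k' *\<^sub>R x0 \<in> M" "k \<noteq> k'"
    have "(z - k' *\<^sub>R x0) - (z - k *\<^sub>R x0) = (k - k') *\<^sub>R x0" by (simp add: algebra_simps)
    then have "(k - k') *\<^sub>R x0 \<in> M" using Mdiff h by metis
    then have "(1 / (k - k')) *\<^sub>R ((k - k') *\<^sub>R x0) \<in> M" using Mscale by blast
    then have "x0 \<in> M" using h(3) by simp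
    then show False using assms(4) by blast
  qed
  define T where "T z = (THE k. z - k *\<^sub>R x0 \<in> M)" for z
  have T: "\<And>z. z \<in> M1 \<Longrightarrow> z - T z *\<^sub>R x0 \<in> M"
    unfolding T_def by (metis (no_types, lifting) rep uniq theI)
  have Tu: "\<And>z k. z - k *\<^sub>R x0 \<in> M \<Longrightarrow> T z = k"
    unfolding T_def using uniq by blast
  define L where "L z = f0 (z - T z *\<^sub>R x0) + T z * c" for z
  have lin: "linear_functional_on M1 L"
    unfolding linear_functional_on_def
  proof (intro conjI ballI allI)
    fix x y assume x: "x \<in> M1" and y: "y \<in> M1"
    have e: "(x + y) - (T x + T y) *\<^sub>R x0 = (x - T x *\<^sub>R x0) + (y - T y *\<^sub>R x0)"
      by (simp add: algebra_simps)
    have "T (x + y) = T x + T y" using Tu e Madd T x y by metis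
    moreover have "f0 ((x + y) - (T x + T y) *\<^sub>R x0) = f0 (x - T x *\<^sub>R x0) + f0 (y - T y *\<^sub>R x0)"
      using e fadd T x y by metis
    ultimately show "L (x + y) = L x + L y" unfolding L_def
      by (simp add: algebra_simps)
  next
    fix x and r :: real assume x: "x \<in> M1"
    have e: "r *\<^sub>R x - (r * T x) *\<^sub>R x0 = r *\<^sub>R (x - T x *\<^sub>R x0)"
      by (simp add: algebra_simps)
    have "T (r *\<^sub>R x) = r * T x" using Tu e Mscale T x by metis
    moreover have "f0 (r *\<^sub>R x - (r * T x) *\<^sub>R x0) = r * f0 (x - T x *\<^sub>R x0)"
      using e fscale T x by metis
    ultimately show "L (r *\<^sub>R x) = r * L x" unfolding L_def
      by (simp add: algebra_simps)
  qed
  have ext: "\<And>x. x \<in> M \<Longrightarrow> L x = f0 x"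
  proof -
    fix x assume "x \<in> M"
    then have "T x = 0" using Tu[of x 0] by simp
    then show "L x = f0 x" unfolding L_def by simp
  qed
  have bnd: "\<And>z. z \<in> M1 \<Longrightarrow> P z \<le> L z \<and> L z \<le> S z"
  proof -
    fix z assume z: "z \<in> M1"
    define t where "t = T z"
    define x where "x = z - t *\<^sub>R x0"
    have x: "x \<in> M" unfolding x_def t_def using T z by blast
    have Lz: "L z = f0 x + t * c" unfolding L_def x_def t_def by simp
    have zx: "z = x + t *\<^sub>R x0" unfolding x_def by simp
    consider "t > 0" | "t < 0" | "t = 0" by linarith
    then show "P z \<le> L z \<and> L z \<le> S z"
    proof cases
      case 1
      define u where "u = (1 / t) *\<^sub>R x"
      have u: "u \<in> M" unfolding u_def using Mscale x by blast
      have tu: "t *\<^sub>R u = x" unfolding u_def using 1 by simp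
      have z1: "z = t *\<^sub>R (u + x0)" using zx tu by (simp add: scaleR_right_distrib)
      have fu: "f0 x = t * f0 u" using tu fscale u by metis
      have Sz: "S z = t * S (u + x0)" using z1 Shom 1 by simp
      have Pz: "P z = t * P (u + x0)" using z1 Phom 1 by simp
      have a: "c \<le> S (u + x0) - f0 u" using cle u by blast
      have b: "P (u + x0) - f0 u \<le> c" using c2 u by blast
      have "t * c \<le> t * (S (u + x0) - f0 u)" using a 1 by (simp add: mult_left_mono)
      moreover have "t * (P (u + x0) - f0 u) \<le> t * c" using b 1 by (simp add: mult_left_mono)
      ultimately show ?thesis using Lz Sz Pz fu by (simp add: algebra_simps)
    next
      case 2
      define s where "s = - t"
      have s: "s > 0" using 2 s_def by simp
      define u where "u = (1 / s) *\<^sub>R x"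
      have u: "u \<in> M" unfolding u_def using Mscale x by blast
      have su: "s *\<^sub>R u = x" unfolding u_def using s by simp
      have z1: "z = s *\<^sub>R (u - x0)" using zx su s_def by (simp add: scaleR_right_diff_distrib)
      have fu: "f0 x = s * f0 u" using su fscale u by metis
      have Sz: "S z = s * S (u - x0)" using z1 Shom s by simp
      have Pz: "P z = s * P (u - x0)" using z1 Phom s by simp
      have a: "c \<le> f0 u - P (u - x0)" using cle u by blast
      have b: "f0 u - S (u - x0) \<le> c" using c1 u by blast
      have "s * c \<le> s * (f0 u - P (u - x0))" using a s by (simp add: mult_left_mono)
      moreover have "s * (f0 u - S (u - x0)) \<le> s * c" using b s by (simp add: mult_left_mono)
      ultimately show ?thesis using Lz Sz Pz fu s_def by (simp add: algebra_simps)
    next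
      case 3
      then show ?thesis using Lz zx fS Pf x by simp
    qed
  qed
  show ?thesis using lin ext bnd unfolding M1_def by blast
qed

end
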